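(* Let $\alpha$ be a partial action datum of $M$ on $X\in\mathscr{C}$, let $\eta\colon F\to\Delta(Y)$ be a colimit of the functor $F$ associated to $\alpha$, and let $\beta$ be the global action associated to $\eta$. Then $\eta_e\colon\alpha\to\beta$ is a reflection of $\alpha$ in $\mathrm{Act}_M(\mathscr{C})$.
   Context: Standing assumptions: $M$ is a monoid with identity $e$ and $\mathscr{C}$ is a category with pullbacks. A partial action datum of $M$ on $X$ assigns to each $m\in M$ an isomorphism class of spans $[\operatorname{dom}\alpha_m,\iota_m,\alpha_m]$ with $\iota_m\colon\operatorname{dom}\alpha_m\to X$ a monomorphism and $\alpha_m\colon\operatorname{dom}\alpha_m\to X$ (isomorphism of spans: an isomorphism of apexes commuting with both legs); representatives are fixed. A global action of $M$ on $Y$ is a datum with $\beta(m)=[Y,\mathrm{id}_Y,\beta_m]$, $\beta_e=\mathrm{id}_Y$, $\beta_n\circ\beta_m=\beta_{nm}$. Given data $\alpha$ on $X$ and $\beta$ on $Y$ with representatives $[\operatorname{dom}\alpha_m,\iota_m,\alpha_m]$, $[\operatorname{dom}\beta_m,\kappa_m,\beta_m]$, a datum morphism $\alpha\to\beta$ is a morphism $f\colon X\to Y$ such that for each $m$ there is $f_m\colon\operatorname{dom}\alpha_m\to\operatorname{dom}\beta_m$ with $\kappa_m\circ f_m=f\circ\iota_m$ and $\beta_m\circ f_m=f\circ\alpha_m$. $\mathrm{Act}_M(\mathscr{C})$ is the category of global actions with datum morphisms. A reflection of $\alpha$ in $\mathrm{Act}_M(\mathscr{C})$ is a datum morphism $r\colon\alpha\to\beta$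 with $\beta$ global such that for every datum morphism $f\colon\alpha\to\gamma$ with $\gamma$ global there is a unique datum morphism $f'\colon\beta\to\gamma$ with $f'\circ r=f$. Let $I$ be the category with objects $(M\times M)\sqcup M$, with for each $(m,n)$ one morphism $(m,n)\to mn$ and one morphism $(m,n)\to m$ and no other non-identity morphisms. The functor associated to $\alpha$ is $F\colon I\to\mathscr{C}$ with $F(m,n)=\operatorname{dom}\alpha_n$, $F(m)=X$, $(m,n)\to mn\mapsto\iota_n$, $(m,n)\to m\mapsto\alpha_n$; $\Delta(Y)$ is the constant functor at $Y$. For a colimit $\eta\colon F\to\Delta(Y)$ of $F$, the global action associated to $\eta$ is $\beta(m)=[Y,\mathrm{id}_Y,\beta_m]$, where $\beta_m\colon Y\to Y$ is the unique morphism with $\beta_m\circ\eta_{(s,t)}=\eta_{(ms,t)}$ and $\beta_m\circ\eta_s=\eta_{ms}$ for all $s,t\in M$ (this is a global action). *)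

theory Defs
  imports Main
begin

text \<open>A (small-or-large) category given by objects, arrows, domain, codomain,
  identities and composition; Comp g f is g after f (defined when Cod f = Dom g).\<close>

record ('o, 'a) cat =
  Ob :: "'o set"
  Ar :: "'a set"
  Dom :: "'a \<Rightarrow> 'o"
  Cod :: "'a \<Rightarrow> 'o"
  Id :: "'o \<Rightarrow> 'a"
  Comp :: "'a \<Rightarrow> 'a \<Rightarrow> 'a"

definition hom :: "('o, 'a) cat \<Rightarrow> 'o \<Rightarrow> 'o \<Rightarrow> 'a set" where
  "hom C x y = {f \<in> Ar C. Dom C f = x \<and> Cod C f = y}"

definition category :: "('o, 'a) cat \<Rightarrow> bool" where
  "category C \<longleftrightarrow>
     (\<forall>f\<in>Ar C. Dom C f \<in> Ob C \<and> Cod C f \<in> Ob C) \<and>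
     (\<forall>x\<in>Ob C. Id C x \<in> hom C x x) \<and>
     (\<forall>f\<in>Ar C. \<forall>g\<in>Ar C. Cod C f = Dom C g \<longrightarrow> Comp C g f \<in> hom C (Dom C f) (Cod C g)) \<and>
     (\<forall>f\<in>Ar C. Comp C (Id C (Cod C f)) f = f \<and> Comp C f (Id C (Dom C f)) = f) \<and>
     (\<forall>f\<in>Ar C. \<forall>g\<in>Ar C. \<forall>h\<in>Ar C. Cod C f = Dom C g \<longrightarrow> Cod C g = Dom C h \<longrightarrow>
        Comp C h (Comp C g f) = Comp C (Comp C h g) f)"

definition mono :: "('o, 'a) cat \<Rightarrow> 'a \<Rightarrow> bool" where
  "mono C m \<longleftrightarrow> m \<in> Ar C \<and>
     (\<forall>g\<in>Ar C. \<forall>h\<in>Ar C. Dom C g = Dom C h \<longrightarrow> Cod C g = Dom C m \<longrightarrow> Cod C h = Dom C m \<longrightarrow>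
        Comp C m g = Comp C m h \<longrightarrow> g = h)"

definition has_pullbacks :: "('o, 'a) cat \<Rightarrow> bool" where
  "has_pullbacks C \<longleftrightarrow>
     (\<forall>f\<in>Ar C. \<forall>g\<in>Ar C. Cod C f = Cod C g \<longrightarrow>
        (\<exists>P\<in>Ob C. \<exists>p\<in>hom C P (Dom C f). \<exists>q\<in>hom C P (Dom C g).
           Comp C f p = Comp C g q \<and>
           (\<forall>Q\<in>Ob C. \<forall>p'\<in>hom C Q (Dom C f). \<forall>q'\<in>hom C Q (Dom C g).
              Comp C f p' = Comp C g q' \<longrightarrow>
              (\<exists>!u. u \<in> hom C Q P \<and> Comp C p u = p' \<and> Comp C q u = q'))))"

text \<open>A partial action datum of the monoid 'm on X, given by the fixed representatives
  (dom alpha_m, iota_m, alpha_m) of the span classes.\<close>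

definition partial_action_datum ::
  "('o, 'a) cat \<Rightarrow> 'o \<Rightarrow> ('m \<Rightarrow> 'o) \<Rightarrow> ('m \<Rightarrow> 'a) \<Rightarrow> ('m \<Rightarrow> 'a) \<Rightarrow> bool" where
  "partial_action_datum C X D \<iota> \<alpha> \<longleftrightarrow> X \<in> Ob C \<and>
     (\<forall>m. D m \<in> Ob C \<and> \<iota> m \<in> hom C (D m) X \<and> mono C (\<iota> m) \<and> \<alpha> m \<in> hom C (D m) X)"

definition global_action ::
  "('o, 'a) cat \<Rightarrow> 'o \<Rightarrow> ('m::monoid_mult \<Rightarrow> 'a) \<Rightarrow> bool" where
  "global_action C Y \<beta> \<longleftrightarrow> Y \<in> Ob C \<and>
     (\<forall>m. \<beta> m \<in> hom C Y Y) \<and> \<beta> 1 = Id C Y \<and>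
     (\<forall>m n. Comp C (\<beta> n) (\<beta> m) = \<beta> (n * m))"

definition datum_morphism ::
  "('o, 'a) cat \<Rightarrow> 'o \<Rightarrow> ('m \<Rightarrow> 'o) \<Rightarrow> ('m \<Rightarrow> 'a) \<Rightarrow> ('m \<Rightarrow> 'a)
     \<Rightarrow> 'o \<Rightarrow> ('m \<Rightarrow> 'o) \<Rightarrow> ('m \<Rightarrow> 'a) \<Rightarrow> ('m \<Rightarrow> 'a) \<Rightarrow> 'a \<Rightarrow> bool" where
  "datum_morphism C X D \<iota> \<alpha> Y E \<kappa> \<beta> f \<longleftrightarrow> f \<in> hom C X Y \<and>
     (\<forall>m. \<exists>fm \<in> hom C (D m) (E m).
        Comp C (\<kappa> m) fm = Comp C f (\<iota> m) \<and> Comp C (\<beta> m) fm = Comp C f (\<alpha> m))"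

abbreviation datum_morphism_to_global ::
  "('o, 'a) cat \<Rightarrow> 'o \<Rightarrow> ('m \<Rightarrow> 'o) \<Rightarrow> ('m \<Rightarrow> 'a) \<Rightarrow> ('m \<Rightarrow> 'a)
     \<Rightarrow> 'o \<Rightarrow> ('m \<Rightarrow> 'a) \<Rightarrow> 'a \<Rightarrow> bool" where
  "datum_morphism_to_global C X D \<iota> \<alpha> Y \<beta> f \<equiv>
     datum_morphism C X D \<iota> \<alpha> Y (\<lambda>_. Y) (\<lambda>_. Id C Y) \<beta> f"

definition reflection ::
  "('o, 'a) cat \<Rightarrow> 'o \<Rightarrow> ('m::monoid_mult \<Rightarrow> 'o) \<Rightarrow> ('m \<Rightarrow> 'a) \<Rightarrow> ('m \<Rightarrow> 'a)
     \<Rightarrow> 'o \<Rightarrow> ('m \<Rightarrow> 'a) \<Rightarrow> 'a \<Rightarrow> bool" where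
  "reflection C X D \<iota> \<alpha> Y \<beta> r \<longleftrightarrow>
     global_action C Y \<beta> \<and> datum_morphism_to_global C X D \<iota> \<alpha> Y \<beta> r \<and>
     (\<forall>Z \<gamma> f. global_action C Z \<gamma> \<longrightarrow> datum_morphism_to_global C X D \<iota> \<alpha> Z \<gamma> f \<longrightarrow>
        (\<exists>!f'. datum_morphism C Y (\<lambda>_. Y) (\<lambda>_. Id C Y) \<beta> Z (\<lambda>_. Z) (\<lambda>_. Id C Z) \<gamma> f'
               \<and> Comp C f' r = f))"

text \<open>Cocones from the functor F associated to alpha (on the index category I with objects
  (M x M) + M) to the constant functor at Y: components etaP m n : dom alpha_n -> Y at (m,n)
  and etaS m : X -> Y at m, natural w.r.t. (m,n) -> mn (image iota_n) and (m,n) -> m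
  (image alpha_n).\<close>

definition cocone ::
  "('o, 'a) cat \<Rightarrow> 'o \<Rightarrow> ('m::monoid_mult \<Rightarrow> 'o) \<Rightarrow> ('m \<Rightarrow> 'a) \<Rightarrow> ('m \<Rightarrow> 'a)
     \<Rightarrow> 'o \<Rightarrow> ('m \<Rightarrow> 'm \<Rightarrow> 'a) \<Rightarrow> ('m \<Rightarrow> 'a) \<Rightarrow> bool" where
  "cocone C X D \<iota> \<alpha> Y etaP etaS \<longleftrightarrow> Y \<in> Ob C \<and>
     (\<forall>m n. etaP m n \<in> hom C (D n) Y) \<and> (\<forall>m. etaS m \<in> hom C X Y) \<and>
     (\<forall>m n. Comp C (etaS (m * n)) (\<iota> n) = etaP m n) \<and>
     (\<forall>m n. Comp C (etaS m) (\<alpha> n) = etaP m n)"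

definition colimit ::
  "('o, 'a) cat \<Rightarrow> 'o \<Rightarrow> ('m::monoid_mult \<Rightarrow> 'o) \<Rightarrow> ('m \<Rightarrow> 'a) \<Rightarrow> ('m \<Rightarrow> 'a)
     \<Rightarrow> 'o \<Rightarrow> ('m \<Rightarrow> 'm \<Rightarrow> 'a) \<Rightarrow> ('m \<Rightarrow> 'a) \<Rightarrow> bool" where
  "colimit C X D \<iota> \<alpha> Y etaP etaS \<longleftrightarrow> cocone C X D \<iota> \<alpha> Y etaP etaS \<and>
     (\<forall>Z zP zS. cocone C X D \<iota> \<alpha> Z zP zS \<longrightarrow>
        (\<exists>!u. u \<in> hom C Y Z \<and> (\<forall>m n. Comp C u (etaP m n) = zP m n) \<and>
                              (\<forall>m. Comp C u (etaS m) = zS m)))"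

definition assoc_action ::
  "('o, 'a) cat \<Rightarrow> 'o \<Rightarrow> ('m::monoid_mult \<Rightarrow> 'm \<Rightarrow> 'a) \<Rightarrow> ('m \<Rightarrow> 'a) \<Rightarrow> 'm \<Rightarrow> 'a" where
  "assoc_action C Y etaP etaS m =
     (THE b. b \<in> hom C Y Y \<and> (\<forall>s t. Comp C b (etaP s t) = etaP (m * s) t) \<and>
                             (\<forall>s. Comp C b (etaS s) = etaS (m * s)))"

end

theory Submission
  imports Defs
begin

lemma hom_objs: "category C \<Longrightarrow> f \<in> hom C x y \<Longrightarrow> x \<in> Ob C \<and> y \<in> Ob C"
  unfolding category_def hom_def by auto

lemma cat_comp: "category C \<Longrightarrow> f \<in> hom C x y \<Longrightarrow> g \<in> hom C y z \<Longrightarrow> Comp C g f \<in> hom C x z"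
  unfolding category_def hom_def by auto

lemma cat_assoc: "category C \<Longrightarrow> f \<in> hom C x y \<Longrightarrow> g \<in> hom C y z \<Longrightarrow> h \<in> hom C z w
   \<Longrightarrow> Comp C h (Comp C g f) = Comp C (Comp C h g) f"
  unfolding category_def hom_def by auto

lemma cat_idl: "category C \<Longrightarrow> f \<in> hom C x y \<Longrightarrow> Comp C (Id C y) f = f"
  unfolding category_def hom_def by auto

lemma cat_idr: "category C \<Longrightarrow> f \<in> hom C x y \<Longrightarrow> Comp C f (Id C x) = f"
  unfolding category_def hom_def by auto

lemma cat_id: "category C \<Longrightarrow> x \<in> Ob C \<Longrightarrow> Id C x \<in> hom C x x"
  unfolding category_def by auto

context
  fixes C :: "('o, 'a) cat"
    and X Y :: 'o
    and D :: "'m::monoid_mult \<Rightarrow> 'o"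
    and \<iota> \<alpha> :: "'m \<Rightarrow> 'a"
    and etaP :: "'m \<Rightarrow> 'm \<Rightarrow> 'a"
    and etaS :: "'m \<Rightarrow> 'a"
  assumes cat: "category C"
    and pad: "partial_action_datum C X D \<iota> \<alpha>"
    and colim: "colimit C X D \<iota> \<alpha> Y etaP etaS"
begin

lemma coc: "cocone C X D \<iota> \<alpha> Y etaP etaS"
  using colim unfolding colimit_def by auto

lemma etaS_hom: "etaS s \<in> hom C X Y" using coc unfolding cocone_def by auto
lemma etaP_hom: "etaP s t \<in> hom C (D t) Y" using coc unfolding cocone_def by auto
lemma etaP_iota: "Comp C (etaS (s * t)) (\<iota> t) = etaP s t" using coc unfolding cocone_def by auto
lemma etaP_alpha: "Comp C (etaS s) (\<alpha> t) = etaP s t" using coc unfolding cocone_def by auto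
lemma iota_hom: "\<iota> t \<in> hom C (D t) X" using pad unfolding partial_action_datum_def by auto
lemma alpha_hom: "\<alpha> t \<in> hom C (D t) X" using pad unfolding partial_action_datum_def by auto
lemma Y_ob: "Y \<in> Ob C" using coc unfolding cocone_def by auto
lemma X_ob: "X \<in> Ob C" using pad unfolding partial_action_datum_def by auto

lemma joint_epi:
  assumes u: "u \<in> hom C Y Z" and v: "v \<in> hom C Y Z"
    and eq: "\<And>s. Comp C u (etaS s) = Comp C v (etaS s)"
  shows "u = v"
proof -
  have Z: "Z \<in> Ob C" using hom_objs[OF cat u] by auto
  have cc: "cocone C X D \<iota> \<alpha> Z (\<lambda>s t. Comp C u (etaP s t)) (\<lambda>s. Comp C u (etaS s))"
    unfolding cocone_def
  proof (intro conjI allI Z)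
    fix m n
    show "Comp C u (etaP m n) \<in> hom C (D n) Z" by (rule cat_comp[OF cat etaP_hom u])
    show "Comp C (Comp C u (etaS (m * n))) (\<iota> n) = Comp C u (etaP m n)"
      using cat_assoc[OF cat iota_hom etaS_hom u] etaP_iota by metis
    show "Comp C (Comp C u (etaS m)) (\<alpha> n) = Comp C u (etaP m n)"
      using cat_assoc[OF cat alpha_hom etaS_hom u] etaP_alpha by metis
  next
    fix m show "Comp C u (etaS m) \<in> hom C X Z" by (rule cat_comp[OF cat etaS_hom u])
  qed
  have vP: "Comp C v (etaP s t) = Comp C u (etaP s t)" for s t
  proof -
    have "Comp C v (etaP s t) = Comp C v (Comp C (etaS s) (\<alpha> t))" using etaP_alpha by metis
    also have "\<dots> = Comp C (Comp C v (etaS s)) (\<alpha> t)" by (rule cat_assoc[OF cat alpha_hom etaS_hom v])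
    also have "\<dots> = Comp C (Comp C u (etaS s)) (\<alpha> t)" using eq by metis
    also have "\<dots> = Comp C u (Comp C (etaS s) (\<alpha> t))" by (rule cat_assoc[OF cat alpha_hom etaS_hom u, symmetric])
    finally show ?thesis using etaP_alpha by metis
  qed
  from colim cc have "\<exists>!w. w \<in> hom C Y Z \<and> (\<forall>m n. Comp C w (etaP m n) = Comp C u (etaP m n)) \<and>
                              (\<forall>m. Comp C w (etaS m) = Comp C u (etaS m))"
    unfolding colimit_def by blast
  then show ?thesis using u v vP eq by metis
qed

definition B where "B m = assoc_action C Y etaP etaS m"

lemma B_prop: "B m \<in> hom C Y Y \<and> (\<forall>s t. Comp C (B m) (etaP s t) = etaP (m * s) t) \<and>
                             (\<forall>s. Comp C (B m) (etaS s) = etaS (m * s))"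
proof -
  have cc: "cocone C X D \<iota> \<alpha> Y (\<lambda>s t. etaP (m * s) t) (\<lambda>s. etaS (m * s))"
    unfolding cocone_def using Y_ob etaP_hom etaS_hom etaP_iota etaP_alpha
    by (simp add: mult.assoc[symmetric])
  from colim cc have "\<exists>!b. b \<in> hom C Y Y \<and> (\<forall>s t. Comp C b (etaP s t) = etaP (m * s) t) \<and>
                             (\<forall>s. Comp C b (etaS s) = etaS (m * s))"
    unfolding colimit_def by blast
  then show ?thesis unfolding B_def assoc_action_def by (rule theI')
qed

lemma B_hom: "B m \<in> hom C Y Y" using B_prop by blast
lemma B_S: "Comp C (B m) (etaS s) = etaS (m * s)" using B_prop by blast

lemma B_global: "global_action C Y B"
  unfolding global_action_def
proof (intro conjI allI Y_ob B_hom)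
  show "B 1 = Id C Y"
    by (rule joint_epi[OF B_hom cat_id[OF cat Y_ob]]) (simp add: B_S cat_idl[OF cat etaS_hom])
  fix m n
  show "Comp C (B n) (B m) = B (n * m)"
  proof (rule joint_epi[OF cat_comp[OF cat B_hom B_hom] B_hom])
    fix s
    have "Comp C (Comp C (B n) (B m)) (etaS s) = Comp C (B n) (Comp C (B m) (etaS s))"
      by (rule cat_assoc[OF cat etaS_hom B_hom B_hom, symmetric])
    then show "Comp C (Comp C (B n) (B m)) (etaS s) = Comp C (B (n * m)) (etaS s)"
      by (simp add: B_S mult.assoc)
  qed
qed

lemma r_dm: "datum_morphism_to_global C X D \<iota> \<alpha> Y B (etaS 1)"
  unfolding datum_morphism_def
proof (intro conjI allI etaS_hom)
  fix m
  let ?f = "Comp C (etaS 1) (\<iota> m)"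
  have fh: "?f \<in> hom C (D m) Y" by (rule cat_comp[OF cat iota_hom etaS_hom])
  have "Comp C (B m) ?f = Comp C (Comp C (B m) (etaS 1)) (\<iota> m)"
    by (rule cat_assoc[OF cat iota_hom etaS_hom B_hom])
  also have "\<dots> = Comp C (etaS m) (\<iota> m)" by (simp add: B_S)
  also have "\<dots> = etaP 1 m" using etaP_iota[of 1 m] by simp
  also have "\<dots> = Comp C (etaS 1) (\<alpha> m)" using etaP_alpha by metis
  finally show "\<exists>fm\<in>hom C (D m) Y. Comp C (Id C Y) fm = ?f \<and> Comp C (B m) fm = Comp C (etaS 1) (\<alpha> m)"
    using fh cat_idl[OF cat fh] by blast
qed

lemma univ:
  assumes g: "global_action C Z \<gamma>" and f: "datum_morphism_to_global C X D \<iota> \<alpha> Z \<gamma> f"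
  shows "\<exists>!f'. datum_morphism C Y (\<lambda>_. Y) (\<lambda>_. Id C Y) B Z (\<lambda>_. Z) (\<lambda>_. Id C Z) \<gamma> f'
               \<and> Comp C f' (etaS 1) = f"
proof -
  have Z: "Z \<in> Ob C" and gh: "\<And>m. \<gamma> m \<in> hom C Z Z" and g1: "\<gamma> 1 = Id C Z"
    and gm: "\<And>m n. Comp C (\<gamma> n) (\<gamma> m) = \<gamma> (n * m)"
    using g unfolding global_action_def by auto
  have fh: "f \<in> hom C X Z" using f unfolding datum_morphism_def by auto
  have key: "Comp C (\<gamma> m) (Comp C f (\<iota> m)) = Comp C f (\<alpha> m)" for m
  proof -
    obtain fm where fm: "fm \<in> hom C (D m) Z" "Comp C (Id C Z) fm = Comp C f (\<iota> m)"
      "Comp C (\<gamma> m) fm = Comp C f (\<alpha> m)"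
      using f unfolding datum_morphism_def by blast
    then show ?thesis using cat_idl[OF cat fm(1)] by simp
  qed
  define zS where "zS s = Comp C (\<gamma> s) f" for s
  define zP where "zP s t = Comp C (zS s) (\<alpha> t)" for s t
  have zSh: "zS s \<in> hom C X Z" for s unfolding zS_def by (rule cat_comp[OF cat fh gh])
  have cc: "cocone C X D \<iota> \<alpha> Z zP zS"
    unfolding cocone_def
  proof (intro conjI allI Z zSh)
    fix m n
    show "zP m n \<in> hom C (D n) Z" unfolding zP_def by (rule cat_comp[OF cat alpha_hom zSh])
    have "Comp C (zS (m * n)) (\<iota> n) = Comp C (Comp C (Comp C (\<gamma> m) (\<gamma> n)) f) (\<iota> n)"
      unfolding zS_def gm ..
    also have "\<dots> = Comp C (\<gamma> m) (Comp C (\<gamma> n) (Comp C f (\<iota> n)))"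
      using cat_assoc[OF cat fh gh gh] cat_assoc[OF cat iota_hom fh gh]
        cat_assoc[OF cat iota_hom cat_comp[OF cat fh gh] gh] by metis
    also have "\<dots> = Comp C (\<gamma> m) (Comp C f (\<alpha> n))" by (simp add: key)
    also have "\<dots> = zP m n" unfolding zP_def zS_def by (rule cat_assoc[OF cat alpha_hom fh gh])
    finally show "Comp C (zS (m * n)) (\<iota> n) = zP m n" .
    show "Comp C (zS m) (\<alpha> n) = zP m n" unfolding zP_def ..
  qed
  from colim cc obtain u where u: "u \<in> hom C Y Z" "\<And>m. Comp C u (etaS m) = zS m"
    unfolding colimit_def by blast
  have u1: "Comp C u (etaS 1) = f" using u(2)[of 1] unfolding zS_def g1 cat_idl[OF cat fh] .
  have comm: "Comp C (\<gamma> m) u = Comp C u (B m)" for m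
  proof (rule joint_epi[OF cat_comp[OF cat u(1) gh] cat_comp[OF cat B_hom u(1)]])
    fix s
    have "Comp C (Comp C (\<gamma> m) u) (etaS s) = Comp C (\<gamma> m) (Comp C (\<gamma> s) f)"
      using cat_assoc[OF cat etaS_hom u(1) gh] u(2) zS_def by metis
    also have "\<dots> = zS (m * s)" unfolding zS_def gm[symmetric]
      by (rule cat_assoc[OF cat fh gh gh])
    also have "\<dots> = Comp C (Comp C u (B m)) (etaS s)"
      using cat_assoc[OF cat etaS_hom B_hom u(1)] B_S u(2) by metis
    finally show "Comp C (Comp C (\<gamma> m) u) (etaS s) = Comp C (Comp C u (B m)) (etaS s)" .
  qed
  have udm: "datum_morphism C Y (\<lambda>_. Y) (\<lambda>_. Id C Y) B Z (\<lambda>_. Z) (\<lambda>_. Id C Z) \<gamma> u"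
    unfolding datum_morphism_def
    using u(1) cat_idl[OF cat u(1)] cat_idr[OF cat u(1)] comm by auto
  show ?thesis
  proof (rule ex1I[of _ u])
    show "datum_morphism C Y (\<lambda>_. Y) (\<lambda>_. Id C Y) B Z (\<lambda>_. Z) (\<lambda>_. Id C Z) \<gamma> u \<and> Comp C u (etaS 1) = f"
      using udm u1 by blast
  next
    fix v assume v: "datum_morphism C Y (\<lambda>_. Y) (\<lambda>_. Id C Y) B Z (\<lambda>_. Z) (\<lambda>_. Id C Z) \<gamma> v \<and> Comp C v (etaS 1) = f"
    have vh: "v \<in> hom C Y Z" using v unfolding datum_morphism_def by auto
    have vc: "Comp C (\<gamma> m) v = Comp C v (B m)" for m
    proof -
      obtain g where gg: "g \<in> hom C Y Z" "Comp C (Id C Z) g = Comp C v (Id C Y)"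
        "Comp C (\<gamma> m) g = Comp C v (B m)"
        using v unfolding datum_morphism_def by blast
      then have "g = v" using cat_idl[OF cat gg(1)] cat_idr[OF cat vh] by simp
      then show ?thesis using gg by simp
    qed
    show "v = u"
    proof (rule joint_epi[OF vh u(1)])
      fix s
      have "Comp C v (etaS s) = Comp C v (Comp C (B s) (etaS 1))" using B_S[of s 1] by simp
      also have "\<dots> = Comp C (Comp C v (B s)) (etaS 1)" by (rule cat_assoc[OF cat etaS_hom B_hom vh])
      also have "\<dots> = Comp C (Comp C (\<gamma> s) v) (etaS 1)" by (simp add: vc)
      also have "\<dots> = Comp C (\<gamma> s) f" using cat_assoc[OF cat etaS_hom vh gh] v by metis
      finally show "Comp C v (etaS s) = Comp C u (etaS s)" using u(2) zS_def by simp
    qed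
  qed
qed

lemma refl_main: "reflection C X D \<iota> \<alpha> Y B (etaS 1)"
  unfolding reflection_def using B_global r_dm univ by blast

end

theorem mainTheorem8:
  fixes C :: "('o, 'a) cat"
    and X Y :: 'o
    and D :: "'m::monoid_mult \<Rightarrow> 'o"
    and \<iota> \<alpha> :: "'m \<Rightarrow> 'a"
    and etaP :: "'m \<Rightarrow> 'm \<Rightarrow> 'a"
    and etaS :: "'m \<Rightarrow> 'a"
  assumes "category C"
    and "has_pullbacks C"
    and "partial_action_datum C X D \<iota> \<alpha>"
    and "colimit C X D \<iota> \<alpha> Y etaP etaS"
  shows "reflection C X D \<iota> \<alpha> Y (assoc_action C Y etaP etaS) (etaS 1)"
proof -
  have "reflection C X D \<iota> \<alpha> Y (B C Y etaP etaS) (etaS 1)"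
    by (rule refl_main[OF assms(1,3,4)])
  moreover have "B C Y etaP etaS = assoc_action C Y etaP etaS"
    by (rule ext) (simp add: B_def[OF assms(1,3,4)])
  ultimately show ?thesis by simp
qed

end
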